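(* In the setting of the context, let $\omega\in\overline{\mathbb{C}}\setminus(i\mathbb{R}\cup\{\delta_+,\delta_-,\infty\})$, $\omega=\omega_\Re+i\omega_\Im$. Then $\omega\in W_\Omega(T)$ if and only if $\omega\notin\partial\mathcal{D}$ and $$\hat\beta(\omega):=\frac{-2\omega_\Im\left((-\omega_\Re^2+\omega_\Im^2+d\omega_\Im+c)^2+\omega_\Re^2(2\omega_\Im+d)^2\right)}{d|\omega|^2+2c\omega_\Im}\in\overline{W(B)}$$ and $$\hat\alpha(\omega):=\frac{(2\omega_\Im+d)|\omega|^4}{d|\omega|^2+2c\omega_\Im}\in\overline{W(A)}.$$
   Context: Let $\mathcal{H}$ be a Hilbert space, $A$ a selfadjoint (possibly unbounded) operator in $\mathcal{H}$ and $B$ a nonzero bounded selfadjoint operator. Let $c\ge0$, $d>0$, $\delta_\pm:=\pm\sqrt{c-d^2/4}-id/2$ (principal square root). $W(A),W(B)\subset\mathbb{R}$ are the numerical ranges. For real $\alpha,\beta$ let $p_{(\alpha,\beta)}(\omega):=(\alpha-\omega^2)(c-id\omega-\omega^2)-\beta\omega^2$ with roots $r_1,\dots,r_4$ labelled continuously in $(\alpha,\beta)$ and extended by limits to $\overline{\mathbb{R}}\times\mathbb{R}$ ($\overline{\mathbb{R}}=\mathbb{R}\cup\{\pm\infty\}$), values in $\overline{\mathbb{C}}$. Let $\Omega:=\overline{W(A)}\times\overline{W(B)}$ (closure of $W(A)$ in $\overline{\mathbb{R}}$) and $W_\Omega(T):=\bigcup_{n=1}^4\bigcup_{(\alpha,\beta)\in\Omega}r_n(\alpha,\beta)$.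 Let $\mathcal{D}:=\{\omega\in\mathbb{C}:|\omega+ic/d|<c/d\}$. *)

theory Defs
  imports "HOL-Analysis.Analysis"
begin

definition pquart :: "real \<Rightarrow> real \<Rightarrow> real \<Rightarrow> real \<Rightarrow> complex \<Rightarrow> complex" where
  "pquart c d \<alpha> \<beta> \<omega> =
     (complex_of_real \<alpha> - \<omega>^2) * (complex_of_real c - \<i> * complex_of_real d * \<omega> - \<omega>^2)
     - complex_of_real \<beta> * \<omega>^2"

definition delta_plus :: "real \<Rightarrow> real \<Rightarrow> complex" where
  "delta_plus c d = csqrt (complex_of_real (c - d^2/4)) - \<i> * complex_of_real d / 2"

definition delta_minus :: "real \<Rightarrow> real \<Rightarrow> complex" where
  "delta_minus c d = - csqrt (complex_of_real (c - d^2/4)) - \<i> * complex_of_real d / 2"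

text \<open>Finite values of the roots r_1..r_4 at a point (alpha,beta) of extended-real x real. The value infinity of the extended complex plane is not represented.\<close>
definition root_set :: "real \<Rightarrow> real \<Rightarrow> ereal \<Rightarrow> real \<Rightarrow> complex set" where
  "root_set c d \<alpha> \<beta> = (case \<alpha> of
      ereal a \<Rightarrow> {\<omega>. pquart c d a \<beta> \<omega> = 0}
    | PInfty \<Rightarrow> {z. \<exists>a w. filterlim a at_top sequentially \<and> w \<longlonglongrightarrow> z \<and>
                         (\<forall>k. pquart c d (a k) \<beta> (w k) = 0)}
    | MInfty \<Rightarrow> {z. \<exists>a w. filterlim a at_bot sequentially \<and> w \<longlonglongrightarrow> z \<and>
                         (\<forall>k. pquart c d (a k) \<beta> (w k) = 0)})"

text \<open>W_Omega(T) (its finite part), with Omega = closure of W(A) in the extended reals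
  times closure of W(B).\<close>
definition W_Omega :: "real \<Rightarrow> real \<Rightarrow> real set \<Rightarrow> real set \<Rightarrow> complex set" where
  "W_Omega c d WA WB = (\<Union>\<alpha>\<in>closure (ereal ` WA). \<Union>\<beta>\<in>closure WB. root_set c d \<alpha> \<beta>)"

definition Dset :: "real \<Rightarrow> real \<Rightarrow> complex set" where
  "Dset c d = {\<omega>. cmod (\<omega> + \<i> * complex_of_real (c/d)) < c/d}"

definition hat_beta :: "real \<Rightarrow> real \<Rightarrow> complex \<Rightarrow> real" where
  "hat_beta c d \<omega> =
     (-2 * Im \<omega> * ((- ((Re \<omega>)^2) + (Im \<omega>)^2 + d * Im \<omega> + c)^2 + (Re \<omega>)^2 * (2 * Im \<omega> + d)^2))
     / (d * (cmod \<omega>)^2 + 2 * c * Im \<omega>)"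

definition hat_alpha :: "real \<Rightarrow> real \<Rightarrow> complex \<Rightarrow> real" where
  "hat_alpha c d \<omega> = ((2 * Im \<omega> + d) * (cmod \<omega>)^4) / (d * (cmod \<omega>)^2 + 2 * c * Im \<omega>)"

end

theory Submission
  imports Defs
begin

definition qf :: "real \<Rightarrow> real \<Rightarrow> complex \<Rightarrow> complex" where
  "qf c d w = complex_of_real c - \<i> * complex_of_real d * w - w^2"

lemma pquart_qf: "pquart c d a b w = of_real a * qf c d w - w^2 * qf c d w - of_real b * w^2"
  unfolding pquart_def qf_def by (simp add: algebra_simps)

lemma qf_delta: "qf c d w = - ((w - delta_plus c d) * (w - delta_minus c d))"
proof -
  have s: "(csqrt (complex_of_real (c - d^2/4)))^2 = complex_of_real (c - d^2/4)" by simp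
  show ?thesis unfolding qf_def delta_plus_def delta_minus_def
    using s by (simp add: algebra_simps power2_eq_square)
qed

lemma qf_nz: "w \<noteq> delta_plus c d \<Longrightarrow> w \<noteq> delta_minus c d \<Longrightarrow> qf c d w \<noteq> 0"
  by (simp add: qf_delta)

lemma limit_root:
  assumes a: "filterlim a at_infinity sequentially" and w: "w \<longlonglongrightarrow> z"
    and p: "\<And>k. pquart c d (a k) b (w k) = 0"
  shows "qf c d z = 0"
proof -
  have ev: "eventually (\<lambda>k. a k \<noteq> 0) sequentially"
    using a by (metis filterlim_at_infinity_imp_eventually_ne)
  have i0: "(\<lambda>k. inverse (a k)) \<longlonglongrightarrow> 0" using filterlim_compose[OF tendsto_inverse_0 a] by (simp add: o_def)
  hence i0c: "(\<lambda>k. complex_of_real (inverse (a k))) \<longlonglongrightarrow> 0"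
    using tendsto_of_real[OF i0, where 'a=complex] by simp
  have cq: "continuous_on UNIV (qf c d)" unfolding qf_def by (intro continuous_intros)
  have qw: "(\<lambda>k. qf c d (w k)) \<longlonglongrightarrow> qf c d z"
    using continuous_on_tendsto_compose[OF cq w] by simp
  have g: "(\<lambda>k. ((w k)^2 * qf c d (w k) + of_real b * (w k)^2) * complex_of_real (inverse (a k)))
       \<longlonglongrightarrow> ((z^2 * qf c d z + of_real b * z^2) * 0)"
    by (intro tendsto_intros qw w i0c)
  have "eventually (\<lambda>k. ((w k)^2 * qf c d (w k) + of_real b * (w k)^2) * complex_of_real (inverse (a k))
      = qf c d (w k)) sequentially"
    using ev
  proof (rule eventually_mono)
    fix k assume "a k \<noteq> 0"
    moreover have "of_real (a k) * qf c d (w k) = (w k)^2 * qf c d (w k) + of_real b * (w k)^2"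
      using p[of k] unfolding pquart_qf by (simp add: algebra_simps)
    ultimately show "((w k)^2 * qf c d (w k) + of_real b * (w k)^2) * complex_of_real (inverse (a k))
      = qf c d (w k)"
      by (metis (no_types, lifting) mult.commute nonzero_mult_div_cancel_left of_real_eq_0_iff
          divide_inverse of_real_inverse)
  qed
  hence "(\<lambda>k. qf c d (w k)) \<longlonglongrightarrow> 0" using g by (simp add: tendsto_cong)
  thus ?thesis using qw LIMSEQ_unique by blast
qed

lemma re_qf: "Re (qf c d w) = c + d * Im w - (Re w)^2 + (Im w)^2"
  by (simp add: qf_def power2_eq_square)
lemma im_qf: "Im (qf c d w) = - Re w * (d + 2 * Im w)"
  by (simp add: qf_def power2_eq_square algebra_simps)

lemma re_pq: "Re (pquart c d a b w) = a * Re (qf c d w) - (((Re w)^2 - (Im w)^2) * Re (qf c d w)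
   - (2 * Re w * Im w) * Im (qf c d w)) - b * ((Re w)^2 - (Im w)^2)"
  unfolding pquart_qf by (simp add: power2_eq_square algebra_simps)
lemma im_pq: "Im (pquart c d a b w) = a * Im (qf c d w) - (((Re w)^2 - (Im w)^2) * Im (qf c d w)
   + (2 * Re w * Im w) * Re (qf c d w)) - b * (2 * Re w * Im w)"
  unfolding pquart_qf by (simp add: power2_eq_square algebra_simps)

lemma key_real:
  fixes x y a b c d Qr Qi :: real
  assumes x: "x \<noteq> 0" and d: "d > 0" and Q: "Qr^2 + Qi^2 \<noteq> 0"
    and Qr: "Qr = c + d * y - x^2 + y^2" and Qi: "Qi = - x * (d + 2 * y)"
  defines "Wr \<equiv> x^2 - y^2" and "Wi \<equiv> 2 * x * y" and "den \<equiv> d * (x^2 + y^2) + 2 * c * y"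
  defines "R \<equiv> a * Qr - (Wr * Qr - Wi * Qi) - b * Wr"
    and "J \<equiv> a * Qi - (Wr * Qi + Wi * Qr) - b * Wi"
  shows "(R = 0 \<and> J = 0) \<longleftrightarrow>
    (den \<noteq> 0 \<and> a = (2 * y + d) * (x^2 + y^2)^2 / den \<and> b = -2 * y * (Qr^2 + Qi^2) / den)"
proof -
  define \<Delta> where "\<Delta> = Qi * Wr - Qr * Wi"
  have D: "\<Delta> = - x * den" unfolding \<Delta>_def Wr_def Wi_def den_def Qr Qi by algebra
  have i1: "Qi * R - Qr * J = Wi * (Qr^2 + Qi^2) - b * \<Delta>"
    unfolding R_def J_def \<Delta>_def by algebra
  have i2: "Wi * R - Wr * J = (x^2+y^2)^2 * Qi - a * \<Delta>"
    unfolding R_def J_def \<Delta>_def Wi_def Wr_def by algebra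
  have i3: "Wr * (Qi * R - Qr * J) - Qr * (Wi * R - Wr * J) = R * \<Delta>"
    unfolding \<Delta>_def by algebra
  have i4: "Wi * (Qi * R - Qr * J) - Qi * (Wi * R - Wr * J) = J * \<Delta>"
    unfolding \<Delta>_def by algebra
  show ?thesis
  proof
    assume RJ: "R = 0 \<and> J = 0"
    have b1: "b * \<Delta> = Wi * (Qr^2 + Qi^2)" using i1 RJ by simp
    have a1: "a * \<Delta> = (x^2+y^2)^2 * Qi" using i2 RJ by simp
    have dn: "den \<noteq> 0"
    proof
      assume "den = 0"
      hence "\<Delta> = 0" using D by simp
      hence "Wi * (Qr^2 + Qi^2) = 0" using b1 by simp
      hence "Wi = 0" using Q by auto
      hence "y = 0" using x unfolding Wi_def by simp
      hence "den = d * x^2" unfolding den_def by simp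
      thus False using \<open>den = 0\<close> x d by simp
    qed
    have "a * (- x * den) = (x^2+y^2)^2 * (- x * (d + 2 * y))" using a1 D Qi by simp
    hence "x * (a * den) = x * ((2 * y + d) * (x^2 + y^2)^2)" by (simp add: algebra_simps)
    hence "a * den = (2 * y + d) * (x^2 + y^2)^2" using x by simp
    hence A: "a = (2 * y + d) * (x^2 + y^2)^2 / den" using dn by (simp add: field_simps)
    have "b * (- x * den) = (2 * x * y) * (Qr^2 + Qi^2)" using b1 D unfolding Wi_def by simp
    hence "x * (b * den) = x * (-2 * y * (Qr^2 + Qi^2))" by (simp add: algebra_simps)
    hence "b * den = -2 * y * (Qr^2 + Qi^2)" using mult_left_cancel[OF x] by metis
    hence B: "b = -2 * y * (Qr^2 + Qi^2) / den" using dn by (simp add: field_simps)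
    show "den \<noteq> 0 \<and> a = (2 * y + d) * (x^2 + y^2)^2 / den \<and> b = -2 * y * (Qr^2 + Qi^2) / den"
      using dn A B by simp
  next
    assume H: "den \<noteq> 0 \<and> a = (2 * y + d) * (x^2 + y^2)^2 / den \<and> b = -2 * y * (Qr^2 + Qi^2) / den"
    hence dn: "den \<noteq> 0" by simp
    have ad: "a * den = (2 * y + d) * (x^2 + y^2)^2" using H by simp
    have bd: "b * den = -2 * y * (Qr^2 + Qi^2)" using H by simp
    have Dn: "\<Delta> \<noteq> 0" using D dn x by simp
    have e1: "Qi * R - Qr * J = 0"
    proof -
      have "b * \<Delta> = - x * (b * den)" using D by simp
      also have "\<dots> = Wi * (Qr^2 + Qi^2)" using bd unfolding Wi_def by simp
      finally show ?thesis using i1 by simp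
    qed
    have e2: "Wi * R - Wr * J = 0"
    proof -
      have "a * \<Delta> = - x * (a * den)" using D by simp
      also have "\<dots> = (x^2+y^2)^2 * Qi" using ad unfolding Qi by (simp add: algebra_simps)
      finally show ?thesis using i2 by simp
    qed
    have "R * \<Delta> = 0" using i3 e1 e2 by simp
    moreover have "J * \<Delta> = 0" using i4 e1 e2 by simp
    ultimately show "R = 0 \<and> J = 0" using Dn by simp
  qed
qed

lemma frontier_D:
  assumes c: "c \<ge> 0" and d: "d > 0" and w: "w \<noteq> 0"
  shows "w \<in> frontier (Dset c d) \<longleftrightarrow> d * ((Re w)^2 + (Im w)^2) + 2 * c * Im w = 0"
proof (cases "c = 0")
  case True
  have D0: "Dset c d = {}" unfolding Dset_def True by auto
  have "(Re w)^2 + (Im w)^2 > 0" using w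
    by (metis complex_eq_iff sum_power2_gt_zero_iff zero_complex.sel(1) zero_complex.sel(2))
  then have pos: "d * ((Re w)^2 + (Im w)^2) > 0" using d by simp
  have eq: "d * ((Re w)^2 + (Im w)^2) + 2 * c * Im w = d * ((Re w)^2 + (Im w)^2)" using True by simp
  have e: "d * ((Re w)^2 + (Im w)^2) + 2 * c * Im w \<noteq> 0"
    unfolding eq using pos by (rule less_imp_neq[symmetric])
  have "w \<notin> frontier (Dset c d)" using D0 by simp
  thus ?thesis using e by blast
next
  case False
  hence cp: "c / d > 0" using c d by simp
  have DB: "Dset c d = ball (- (\<i> * complex_of_real (c/d))) (c/d)"
    unfolding Dset_def ball_def dist_norm by (simp add: norm_minus_commute add.commute)
  have "w \<in> frontier (Dset c d) \<longleftrightarrow> cmod (w + \<i> * complex_of_real (c/d)) = c/d"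
    unfolding DB frontier_ball[OF cp] sphere_def dist_norm
    by (simp add: norm_minus_commute add.commute)
  also have "\<dots> \<longleftrightarrow> (cmod (w + \<i> * complex_of_real (c/d)))^2 = (c/d)^2"
    by (rule power2_eq_iff_nonneg[symmetric]) (use cp in auto)
  also have "\<dots> \<longleftrightarrow> (Re w)^2 + (Im w + c/d)^2 = (c/d)^2"
    unfolding cmod_power2 by simp
  also have "\<dots> \<longleftrightarrow> (Re w)^2 + (Im w)^2 + 2 * (c/d) * Im w = 0"
    by (simp add: power2_eq_square algebra_simps)
  also have "\<dots> \<longleftrightarrow> d * ((Re w)^2 + (Im w)^2 + 2 * (c/d) * Im w) = 0"
    using d by simp
  also have "d * ((Re w)^2 + (Im w)^2 + 2 * (c/d) * Im w) = d * ((Re w)^2 + (Im w)^2) + 2 * c * Im w"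
    using d by (simp add: field_simps)
  finally show ?thesis .
qed

theorem proposition2p6:
  fixes c d :: real and WA WB :: "real set" and \<omega> :: complex
  assumes "c \<ge> 0" and "d > 0"
    and "WA \<noteq> {}" and "convex WA"
    and "WB \<noteq> {}" and "convex WB" and "bounded WB" and "WB \<noteq> {0}"
    and "Re \<omega> \<noteq> 0" and "\<omega> \<noteq> delta_plus c d" and "\<omega> \<noteq> delta_minus c d"
  shows "\<omega> \<in> W_Omega c d WA WB \<longleftrightarrow>
           \<omega> \<notin> frontier (Dset c d) \<and> hat_beta c d \<omega> \<in> closure WB \<and>
           ereal (hat_alpha c d \<omega>) \<in> closure (ereal ` WA)"
proof -
  define x where "x = Re \<omega>"
  define y where "y = Im \<omega>"
  define Qr where "Qr = Re (qf c d \<omega>)"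
  define Qi where "Qi = Im (qf c d \<omega>)"
  define den where "den = d * (x^2 + y^2) + 2 * c * y"
  have x0: "x \<noteq> 0" using assms(9) x_def by simp
  have w0: "\<omega> \<noteq> 0" using assms(9) by auto
  have qnz: "qf c d \<omega> \<noteq> 0" using qf_nz assms(10,11) by blast
  have Qnz: "Qr^2 + Qi^2 \<noteq> 0" unfolding Qr_def Qi_def using qnz
    by (metis complex_eq_iff sum_power2_eq_zero_iff zero_complex.sel(1) zero_complex.sel(2))
  have Qr: "Qr = c + d * y - x^2 + y^2" unfolding Qr_def x_def y_def re_qf by simp
  have Qi: "Qi = - x * (d + 2 * y)" unfolding Qi_def x_def y_def im_qf by simp
  have ha: "hat_alpha c d \<omega> = (2 * y + d) * (x^2 + y^2)^2 / den"
  proof -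
    have "(cmod \<omega>)^4 = ((cmod \<omega>)^2)^2" by simp
    thus ?thesis unfolding hat_alpha_def den_def x_def y_def cmod_power2 by simp
  qed
  have hb: "hat_beta c d \<omega> = -2 * y * (Qr^2 + Qi^2) / den"
    unfolding hat_beta_def den_def Qr Qi x_def[symmetric] y_def[symmetric] cmod_power2
    by (simp add: power2_eq_square algebra_simps)
  have P: "pquart c d a b \<omega> = 0 \<longleftrightarrow> (den \<noteq> 0 \<and> a = hat_alpha c d \<omega> \<and> b = hat_beta c d \<omega>)" for a b
  proof -
    have "pquart c d a b \<omega> = 0 \<longleftrightarrow> Re (pquart c d a b \<omega>) = 0 \<and> Im (pquart c d a b \<omega>) = 0"
      by (simp add: complex_eq_iff)
    also have "\<dots> \<longleftrightarrow> (den \<noteq> 0 \<and> a = (2 * y + d) * (x^2 + y^2)^2 / den \<and> b = -2 * y * (Qr^2 + Qi^2) / den)"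
      unfolding re_pq im_pq Qr_def[symmetric] Qi_def[symmetric] x_def[symmetric] y_def[symmetric] den_def
      by (rule key_real[OF x0 assms(2) Qnz Qr Qi])
    finally show ?thesis unfolding ha hb .
  qed
  have fr: "\<omega> \<in> frontier (Dset c d) \<longleftrightarrow> den = 0"
    unfolding den_def x_def y_def using frontier_D[OF assms(1,2) w0] .
  have inf: "\<omega> \<notin> root_set c d PInfty b" "\<omega> \<notin> root_set c d MInfty b" for b
  proof -
    show "\<omega> \<notin> root_set c d PInfty b"
    proof
      assume "\<omega> \<in> root_set c d PInfty b"
      then obtain a w where a: "filterlim a at_top sequentially" and l: "w \<longlonglongrightarrow> \<omega>"
        and p: "\<And>k. pquart c d (a k) b (w k) = 0" by (auto simp: root_set_def)
      have "qf c d \<omega> = 0" by (rule limit_root[OF filterlim_at_top_imp_at_infinity[OF a] l p])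
      thus False using qnz by simp
    qed
    show "\<omega> \<notin> root_set c d MInfty b"
    proof
      assume "\<omega> \<in> root_set c d MInfty b"
      then obtain a w where a: "filterlim a at_bot sequentially" and l: "w \<longlonglongrightarrow> \<omega>"
        and p: "\<And>k. pquart c d (a k) b (w k) = 0" by (auto simp: root_set_def)
      have ai: "filterlim a at_infinity sequentially"
        using filterlim_mono[OF a at_bot_le_at_infinity order_refl] .
      have "qf c d \<omega> = 0" by (rule limit_root[OF ai l p])
      thus False using qnz by simp
    qed
  qed
  show ?thesis
  proof
    assume "\<omega> \<in> W_Omega c d WA WB"
    then obtain \<alpha> \<beta> where al: "\<alpha> \<in> closure (ereal ` WA)" and be: "\<beta> \<in> closure WB"
      and r: "\<omega> \<in> root_set c d \<alpha> \<beta>" unfolding W_Omega_def by blast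
    show "\<omega> \<notin> frontier (Dset c d) \<and> hat_beta c d \<omega> \<in> closure WB \<and>
           ereal (hat_alpha c d \<omega>) \<in> closure (ereal ` WA)"
    proof (cases \<alpha>)
      case (real a)
      hence "pquart c d a \<beta> \<omega> = 0" using r by (simp add: root_set_def)
      hence "den \<noteq> 0 \<and> a = hat_alpha c d \<omega> \<and> \<beta> = hat_beta c d \<omega>" using P[of a \<beta>] by simp
      thus ?thesis using fr al be real by simp
    next
      case PInf thus ?thesis using r inf by simp
    next
      case MInf thus ?thesis using r inf by simp
    qed
  next
    assume H: "\<omega> \<notin> frontier (Dset c d) \<and> hat_beta c d \<omega> \<in> closure WB \<and>
           ereal (hat_alpha c d \<omega>) \<in> closure (ereal ` WA)"
    hence "pquart c d (hat_alpha c d \<omega>) (hat_beta c d \<omega>) \<omega> = 0"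
      using P[of "hat_alpha c d \<omega>" "hat_beta c d \<omega>"] fr by simp
    hence "\<omega> \<in> root_set c d (ereal (hat_alpha c d \<omega>)) (hat_beta c d \<omega>)"
      by (simp add: root_set_def)
    thus "\<omega> \<in> W_Omega c d WA WB" unfolding W_Omega_def using H by blast
  qed
qed

end
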